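(* Let $H$ be a connected graph that is not a tree. If $H\in\mathcal{G}$, then the girth of $H$ is at most $6$.
   Context: All graphs are finite and simple. $d_{H,2}(x,y)=\min\{d_H(x,y),2\}$ with $d_H$ the shortest-path distance. A local adjacency basis of $H$ is a minimum-size set $S\subseteq V(H)$ such that for any two adjacent vertices $x,y$ some $s\in S$ satisfies $d_{H,2}(s,x)\ne d_{H,2}(s,y)$. $\mathcal{G}$: class of graphs $H$ such that every local adjacency basis $B$ of $H$ satisfies $B\subseteq N_H(v)$ for some $v\in V(H)$ (open neighbourhood). The girth is the length of a shortest cycle. *)

theory Defs
  imports Main "HOL-Library.Extended_Nat"
begin

definition graph :: "'a set \<Rightarrow> ('a \<Rightarrow> 'a \<Rightarrow> bool) \<Rightarrow> bool" where
  "graph V E \<longleftrightarrow> finite V \<and> (\<forall>x y. E x y \<longrightarrow> x \<in> V \<and> y \<in> V) \<and>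
                  (\<forall>x y. E x y \<longrightarrow> E y x) \<and> (\<forall>x. \<not> E x x)"

definition walk :: "'a set \<Rightarrow> ('a \<Rightarrow> 'a \<Rightarrow> bool) \<Rightarrow> 'a list \<Rightarrow> bool" where
  "walk V E p \<longleftrightarrow> p \<noteq> [] \<and> set p \<subseteq> V \<and> (\<forall>i. Suc i < length p \<longrightarrow> E (p ! i) (p ! Suc i))"

text \<open>Shortest-path distance (infinity if no walk exists).\<close>
definition dist :: "'a set \<Rightarrow> ('a \<Rightarrow> 'a \<Rightarrow> bool) \<Rightarrow> 'a \<Rightarrow> 'a \<Rightarrow> enat" where
  "dist V E x y = Inf {enat (length p - 1) | p. walk V E p \<and> hd p = x \<and> last p = y}"

definition dist2 :: "'a set \<Rightarrow> ('a \<Rightarrow> 'a \<Rightarrow> bool) \<Rightarrow> 'a \<Rightarrow> 'a \<Rightarrow> enat" where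
  "dist2 V E x y = min (dist V E x y) 2"

definition connected :: "'a set \<Rightarrow> ('a \<Rightarrow> 'a \<Rightarrow> bool) \<Rightarrow> bool" where
  "connected V E \<longleftrightarrow> (\<forall>x\<in>V. \<forall>y\<in>V. \<exists>p. walk V E p \<and> hd p = x \<and> last p = y)"

definition is_cycle :: "'a set \<Rightarrow> ('a \<Rightarrow> 'a \<Rightarrow> bool) \<Rightarrow> 'a list \<Rightarrow> bool" where
  "is_cycle V E c \<longleftrightarrow> length c \<ge> 3 \<and> distinct c \<and> walk V E c \<and> E (last c) (hd c)"

definition is_tree :: "'a set \<Rightarrow> ('a \<Rightarrow> 'a \<Rightarrow> bool) \<Rightarrow> bool" where
  "is_tree V E \<longleftrightarrow> connected V E \<and> V \<noteq> {} \<and> (\<nexists>c. is_cycle V E c)"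

text \<open>Girth: length of a shortest cycle (infinity for acyclic graphs).\<close>
definition girth :: "'a set \<Rightarrow> ('a \<Rightarrow> 'a \<Rightarrow> bool) \<Rightarrow> enat" where
  "girth V E = Inf {enat (length c) | c. is_cycle V E c}"

definition nbhd :: "'a set \<Rightarrow> ('a \<Rightarrow> 'a \<Rightarrow> bool) \<Rightarrow> 'a \<Rightarrow> 'a set" where
  "nbhd V E v = {u \<in> V. E v u}"

definition local_adj_resolving :: "'a set \<Rightarrow> ('a \<Rightarrow> 'a \<Rightarrow> bool) \<Rightarrow> 'a set \<Rightarrow> bool" where
  "local_adj_resolving V E S \<longleftrightarrow> S \<subseteq> V \<and>
     (\<forall>x y. E x y \<longrightarrow> (\<exists>s\<in>S. dist2 V E s x \<noteq> dist2 V E s y))"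

definition local_adj_basis :: "'a set \<Rightarrow> ('a \<Rightarrow> 'a \<Rightarrow> bool) \<Rightarrow> 'a set \<Rightarrow> bool" where
  "local_adj_basis V E B \<longleftrightarrow> local_adj_resolving V E B \<and>
     (\<forall>S. local_adj_resolving V E S \<longrightarrow> card B \<le> card S)"

definition in_class_G :: "'a set \<Rightarrow> ('a \<Rightarrow> 'a \<Rightarrow> bool) \<Rightarrow> bool" where
  "in_class_G V E \<longleftrightarrow> (\<forall>B. local_adj_basis V E B \<longrightarrow> (\<exists>v\<in>V. B \<subseteq> nbhd V E v))"

end

theory Submission imports Defs begin

lemma dist_ge2:
  assumes "s \<noteq> x" "\<not> E s x"
  shows "dist V E s x \<ge> 2"
  unfolding dist_def
proof (rule Inf_greatest, clarify)
  fix p assume w: "walk V E p" "s = hd p" "x = last p"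
  show "2 \<le> enat (length p - 1)"
  proof (rule ccontr)
    assume "\<not> 2 \<le> enat (length p - 1)"
    then have "length p \<le> 2" by (simp add: numeral_eq_enat)
    moreover have "p \<noteq> []" using w by (simp add: walk_def)
    moreover have "length p > 0" using \<open>p \<noteq> []\<close> by simp
    ultimately have "length p = 1 \<or> length p = 2" by linarith
    then show False
    proof (elim disjE)
      assume 1: "length p = 1" then obtain a where "p = [a]" by (cases p) auto
      then show False using w assms by simp
    next
      assume 2: "length p = 2" then obtain a b where pe: "p = [a,b]" by (cases p; cases "tl p") auto
      have "E (p!0) (p!Suc 0)" using w 2 by (simp add: walk_def)
      then show False using w assms pe by simp
    qed
  qed
qed

lemma dist_ge1:
  assumes "s \<noteq> x"
  shows "dist V E s x \<ge> 1"
  unfolding dist_def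
proof (rule Inf_greatest, clarify)
  fix p assume w: "walk V E p" "s = hd p" "x = last p"
  show "1 \<le> enat (length p - 1)"
  proof (rule ccontr)
    assume "\<not> 1 \<le> enat (length p - 1)"
    then have "length p \<le> 1" by (simp add: one_enat_def)
    moreover have "p \<noteq> []" using w by (simp add: walk_def)
    ultimately obtain a where "p = [a]" by (cases p) auto
    then show False using w assms by simp
  qed
qed

lemma dist_self: assumes "x \<in> V" shows "dist V E x x = 0"
proof -
  have "0 \<in> {enat (length p - 1) |p. walk V E p \<and> hd p = x \<and> last p = x}"
    using assms by (intro CollectI exI[of _ "[x]"]) (simp add: walk_def zero_enat_def)
  then show ?thesis unfolding dist_def by (meson Inf_lower le_zero_eq)
qed

lemma resolve_near:
  assumes "dist2 V E s x \<noteq> dist2 V E s y"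
  shows "s = x \<or> E s x \<or> s = y \<or> E s y"
proof (rule ccontr)
  assume "\<not> ?thesis"
  then have "dist V E s x \<ge> 2" "dist V E s y \<ge> 2" using dist_ge2 by metis+
  then have "dist2 V E s x = 2" "dist2 V E s y = 2" unfolding dist2_def by (simp_all add: min_absorb2)
  then show False using assms by simp
qed

lemma V_resolving:
  assumes "graph V E" shows "local_adj_resolving V E V"
  unfolding local_adj_resolving_def
proof (intro conjI allI impI)
  fix x y assume e: "E x y"
  have xV: "x \<in> V" and xy: "x \<noteq> y" using assms e by (auto simp: graph_def)
  have "dist2 V E x x = 0" using dist_self[OF xV] by (simp add: dist2_def)
  moreover have "dist2 V E x y \<ge> 1" using dist_ge1[OF xy, of V E]
    by (simp add: dist2_def)
  ultimately have "dist2 V E x x \<noteq> dist2 V E x y" by auto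
  then show "\<exists>s\<in>V. dist2 V E s x \<noteq> dist2 V E s y" using xV by blast
qed simp

lemma basis_exists:
  assumes "graph V E" shows "\<exists>B. local_adj_basis V E B"
proof -
  let ?P = "\<lambda>n. \<exists>S. local_adj_resolving V E S \<and> card S = n"
  have ex: "?P (card V)" using V_resolving[OF assms] by blast
  obtain B where B: "local_adj_resolving V E B" "card B = (LEAST n. ?P n)"
    using LeastI_ex[of ?P] ex by blast
  have "card B \<le> card S" if "local_adj_resolving V E S" for S
    using B(2) Least_le[of ?P "card S"] that by auto
  then show ?thesis using B unfolding local_adj_basis_def by blast
qed

lemma core:
  fixes E :: "'a \<Rightarrow> 'a \<Rightarrow> bool"
  assumes sym: "\<And>x y. E x y \<Longrightarrow> E y x" and irr: "\<And>x. \<not> E x x"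
  and C3: "\<And>x y z. E x y \<Longrightarrow> E y z \<Longrightarrow> E z x \<Longrightarrow> False"
  and C4: "\<And>a b c d. distinct [a,b,c,d] \<Longrightarrow> E a b \<Longrightarrow> E b c \<Longrightarrow> E c d \<Longrightarrow> E d a \<Longrightarrow> False"
  and C5: "\<And>a b c d e. distinct [a,b,c,d,e] \<Longrightarrow> E a b \<Longrightarrow> E b c \<Longrightarrow> E c d \<Longrightarrow> E d e \<Longrightarrow> E e a \<Longrightarrow> False"
  and C6: "\<And>a b c d e f. distinct [a,b,c,d,e,f] \<Longrightarrow> E a b \<Longrightarrow> E b c \<Longrightarrow> E c d \<Longrightarrow> E d e \<Longrightarrow> E e f \<Longrightarrow> E f a \<Longrightarrow> False"
  and Q: "\<And>y. y \<in> W \<Longrightarrow> \<exists>a\<in>W. \<exists>b\<in>W. a \<noteq> b \<and> E a y \<and> E y b \<and> (N y \<or> N a) \<and> (N y \<or> N b)"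
  and Ndef: "\<And>x. N x \<longleftrightarrow> (\<exists>s. E v s \<and> (s = x \<or> E s x))"
  and y0: "y0 \<in> W" "y0 \<noteq> v"
  shows False
proof -
  have S1: "N y" if yW: "y \<in> W" for y
  proof (rule ccontr)
    assume nN: "\<not> N y"
    obtain a b where ab: "a \<in> W" "b \<in> W" "a \<noteq> b" "E a y" "E y b" "N a" "N b"
      using Q[OF yW] nN by blast
    have ny: "\<not> E v y" using nN Ndef by blast
    obtain s where s: "E v s" "s = a \<or> E s a" using ab Ndef by blast
    have "s \<noteq> a" using s ab nN Ndef by blast
    with s have s2: "E s a" by simp
    obtain t where t: "E v t" "t = b \<or> E t b" using ab Ndef by blast
    have "t \<noteq> b" using t ab nN Ndef sym by blast
    with t have t2: "E t b" by simp
    have av: "a \<noteq> v" using ab nN Ndef by blast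
    have bv: "b \<noteq> v" using ab nN Ndef sym by blast
    have yv: "y \<noteq> v" using ab nN Ndef sym by blast
    have sy: "s \<noteq> y" using s nN Ndef by blast
    have ty: "t \<noteq> y" using t nN Ndef by blast
    have sb: "s \<noteq> b" using s nN Ndef ab sym by blast
    have ta: "t \<noteq> a" using t nN Ndef ab sym by blast
    show False
    proof (cases "s = t")
      case True
      show False
        apply (rule C4[of s a y b])
        using True s2 t2 ab sy sb irr sym by auto
    next
      case False
      show False
        apply (rule C6[of v s a y b t])
        using False s t s2 t2 ab sy sb ty ta av bv yv irr sym by (auto; metis irr)+
    qed
  qed
  have S2: "E v y" if yW: "y \<in> W" and yv: "y \<noteq> v" for y
  proof (rule ccontr)
    assume ny: "\<not> E v y"
    obtain p where p: "E v p" "E p y" using S1[OF yW] Ndef ny by blast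
    obtain a b where ab: "a \<in> W" "b \<in> W" "a \<noteq> b" "E a y" "E y b"
      using Q[OF yW] by blast
    have L1: "E v x" if xW: "x \<in> W" and xy: "E x y" for x
    proof (rule ccontr)
      assume nx: "\<not> E v x"
      have xv: "x \<noteq> v" using xy ny by auto
      obtain s where s: "E v s" "E s x" using S1[OF xW] Ndef nx by blast
      show False
      proof (cases "s = p")
        case True
        then show False using C3[of s x y] s p xy sym by blast
      next
        case False
        show False
          apply (rule C5[of v s x y p])
          using False s p xy nx ny xv yv irr sym by (auto; metis irr)+
      qed
    qed
    have "E v a" using L1 ab by blast
    moreover have "E v b" using L1 ab sym by blast
    ultimately show False
      apply -
      apply (rule C4[of v a y b])
      using ab ny yv irr sym by (auto; metis irr)+
  qed
  obtain a b where ab: "a \<in> W" "b \<in> W" "a \<noteq> b" "E a y0" "E y0 b"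
    using Q[OF y0(1)] by blast
  have e: "E v y0" using S2 y0 by blast
  have "a = v"
  proof (rule ccontr)
    assume "a \<noteq> v" then have "E v a" using S2 ab by blast
    then show False using C3[of v a y0] ab e sym by blast
  qed
  moreover have "b = v"
  proof (rule ccontr)
    assume "b \<noteq> v" then have "E v b" using S2 ab by blast
    then show False using C3[of v y0 b] ab e sym by blast
  qed
  ultimately show False using ab by simp
qed


lemma walk_cons2: "walk V E (x#y#xs) \<longleftrightarrow> x \<in> V \<and> E x y \<and> walk V E (y#xs)"
  unfolding walk_def
proof safe
  fix i assume "\<forall>i. Suc i < length (x # y # xs) \<longrightarrow> E ((x # y # xs) ! i) ((x # y # xs) ! Suc i)"
    "Suc i < length (y # xs)"
  then show "E ((y # xs) ! i) ((y # xs) ! Suc i)" by (metis length_Cons nth_Cons_Suc Suc_less_eq)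
next
  fix i assume a: "E x y" "\<forall>i. Suc i < length (y # xs) \<longrightarrow> E ((y # xs) ! i) ((y # xs) ! Suc i)"
    "Suc i < length (x # y # xs)"
  then show "E ((x # y # xs) ! i) ((x # y # xs) ! Suc i)"
    by (cases i) auto
qed auto

lemma walk_single: "walk V E [x] \<longleftrightarrow> x \<in> V"
  unfolding walk_def by auto

lemma cycle_mod_edge:
  assumes c: "is_cycle V E c" and i: "i < length c"
  shows "E (c!i) (c!((i+1) mod length c))"
proof (cases "i + 1 < length c")
  case True
  then show ?thesis using c by (simp add: is_cycle_def walk_def)
next
  case False
  then have "i = length c - 1" using i by simp
  moreover have "c \<noteq> []" using i by auto
  ultimately have "c!i = last c" "(i+1) mod length c = 0" "c!0 = hd c"
    by (auto simp: last_conv_nth hd_conv_nth)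
  then show ?thesis using c by (simp add: is_cycle_def)
qed

theorem lemma1:
  fixes V :: "'a set" and E :: "'a \<Rightarrow> 'a \<Rightarrow> bool"
  assumes "graph V E" and "connected V E" and "V \<noteq> {}" and "\<not> is_tree V E"
    and "in_class_G V E"
  shows "girth V E \<le> 6"
proof (rule ccontr)
  assume ng: "\<not> girth V E \<le> 6"
  have sym: "\<And>x y. E x y \<Longrightarrow> E y x" and irr: "\<And>x. \<not> E x x"
    and inV: "\<And>x y. E x y \<Longrightarrow> x \<in> V \<and> y \<in> V"
    using assms(1) by (auto simp: graph_def)
  have long: "length c \<ge> 7" if "is_cycle V E c" for c
  proof (rule ccontr)
    assume "\<not> length c \<ge> 7"
    then have "enat (length c) \<le> 6" by (simp add: numeral_eq_enat)
    moreover have "girth V E \<le> enat (length c)" unfolding girth_def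
      using that by (intro Inf_lower) blast
    ultimately show False using ng by (meson order_trans)
  qed
  have C3: "\<And>x y z. E x y \<Longrightarrow> E y z \<Longrightarrow> E z x \<Longrightarrow> False"
  proof -
    fix x y z assume e: "E x y" "E y z" "E z x"
    have "is_cycle V E [x,y,z]" unfolding is_cycle_def
      using e irr inV by (auto simp: walk_cons2 walk_single)
    then show False using long by fastforce
  qed
  have C4: "\<And>a b c d. distinct [a,b,c,d] \<Longrightarrow> E a b \<Longrightarrow> E b c \<Longrightarrow> E c d \<Longrightarrow> E d a \<Longrightarrow> False"
  proof -
    fix a b c d assume e: "distinct [a,b,c,d]" "E a b" "E b c" "E c d" "E d a"
    have "is_cycle V E [a,b,c,d]" unfolding is_cycle_def
      using e inV by (auto simp: walk_cons2 walk_single)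
    then show False using long by fastforce
  qed
  have C5: "\<And>a b c d e. distinct [a,b,c,d,e] \<Longrightarrow> E a b \<Longrightarrow> E b c \<Longrightarrow> E c d \<Longrightarrow> E d e \<Longrightarrow> E e a \<Longrightarrow> False"
  proof -
    fix a b c d e assume h: "distinct [a,b,c,d,e]" "E a b" "E b c" "E c d" "E d e" "E e a"
    have "is_cycle V E [a,b,c,d,e]" unfolding is_cycle_def
      using h inV by (auto simp: walk_cons2 walk_single)
    then show False using long by fastforce
  qed
  have C6: "\<And>a b c d e f. distinct [a,b,c,d,e,f] \<Longrightarrow> E a b \<Longrightarrow> E b c \<Longrightarrow> E c d \<Longrightarrow> E d e \<Longrightarrow> E e f \<Longrightarrow> E f a \<Longrightarrow> False"
  proof -
    fix a b c d e f assume h: "distinct [a,b,c,d,e,f]" "E a b" "E b c" "E c d" "E d e" "E e f" "E f a"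
    have "is_cycle V E [a,b,c,d,e,f]" unfolding is_cycle_def
      using h inV by (auto simp: walk_cons2 walk_single)
    then show False using long by fastforce
  qed
  obtain B where B: "local_adj_basis V E B" using basis_exists[OF assms(1)] by blast
  then obtain v where v: "v \<in> V" "B \<subseteq> nbhd V E v"
    using assms(5) unfolding in_class_G_def by blast
  define N where "N x \<longleftrightarrow> (\<exists>s. E v s \<and> (s = x \<or> E s x))" for x
  have near: "N x \<or> N y" if e: "E x y" for x y
  proof -
    obtain s where s: "s \<in> B" "dist2 V E s x \<noteq> dist2 V E s y"
      using B e unfolding local_adj_basis_def local_adj_resolving_def by blast
    have "E v s" using s v unfolding nbhd_def by blast
    then show ?thesis using resolve_near[OF s(2)] unfolding N_def by blast
  qed
  obtain c where c: "is_cycle V E c" using assms(2,3,4) unfolding is_tree_def by blast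
  define L where "L = length c"
  have L7: "L \<ge> 7" using long[OF c] L_def by simp
  have dc: "distinct c" using c by (simp add: is_cycle_def)
  have Q: "\<exists>a\<in>set c. \<exists>b\<in>set c. a \<noteq> b \<and> E a y \<and> E y b \<and> (N y \<or> N a) \<and> (N y \<or> N b)"
    if yW: "y \<in> set c" for y
  proof -
    obtain j where j: "j < L" "y = c!j" using yW L_def by (metis in_set_conv_nth)
    define ia where "ia = (j + L - 1) mod L"
    define ib where "ib = (j + 1) mod L"
    have ia: "ia < L" "(ia + 1) mod L = j" unfolding ia_def using j L7
      by (auto simp: mod_Suc_eq)
    have ib: "ib < L" unfolding ib_def using L7 by simp
    have neq: "ia \<noteq> ib"
    proof (cases "j = 0")
      case True then show ?thesis using L7 unfolding ia_def ib_def by simp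
    next
      case False
      show ?thesis
      proof (cases "j = L - 1")
        case True
        have "j + L - 1 = (L-2) + L" using True L7 by simp
        then have "ia = (L - 2) mod L" unfolding ia_def by (simp only: mod_add_self2)
        then have "ia = L - 2" using L7 by simp
        moreover have "ib = 0" unfolding ib_def using True L7 by simp
        ultimately show ?thesis using L7 by simp
      next
        case False2: False
        then have "ib = j + 1" using j \<open>j \<noteq> 0\<close> unfolding ia_def ib_def by simp
        have "j + L - 1 = (j - 1) + L" using \<open>j \<noteq> 0\<close> by simp
        then have "ia = (j - 1) mod L" unfolding ia_def by (simp only: mod_add_self2)
        then have "ia = j - 1" using j by simp
        note \<open>ib = j + 1\<close> this
        then show ?thesis by simp
      qed
    qed
    have e1: "E (c!ia) y" using cycle_mod_edge[OF c, of ia] ia j L_def by simp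
    have e2: "E y (c!ib)" using cycle_mod_edge[OF c, of j] j L_def ib_def by simp
    have "c!ia \<noteq> c!ib" using neq dc ia ib L_def by (simp add: nth_eq_iff_index_eq)
    moreover have "c!ia \<in> set c" "c!ib \<in> set c" using ia ib L_def by auto
    ultimately show ?thesis using e1 e2 near sym by blast
  qed
  have "\<exists>y0\<in>set c. y0 \<noteq> v"
  proof -
    have "0 < length c" "1 < length c" using L7 L_def by auto
    then have "c!0 \<noteq> c!1" using nth_eq_iff_index_eq[OF dc] by (metis zero_neq_one)
    moreover have "c!0 \<in> set c" "c!1 \<in> set c" using \<open>0 < length c\<close> \<open>1 < length c\<close> nth_mem by blast+
    ultimately show ?thesis by metis
  qed
  then obtain y0 where y0: "y0 \<in> set c" "y0 \<noteq> v" by blast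
  show False
    apply (rule core[where E=E and W="set c" and N=N and v=v])
    apply (fact sym)
    apply (fact irr)
    apply (fact C3)
    apply (fact C4)
    apply (fact C5)
    apply (fact C6)
    apply (fact Q)
    apply (fact N_def)
    apply (fact y0(1))
    apply (fact y0(2))
    done
qed

end
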